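(* Let $\mathbf A$ be a regular BBL transformation of bandwidth $(p,q)$, and let $z_1,\dots,z_n$ be the distinct nonzero roots of $\det A(w,w^{-1})$ with multiplicities $s_1,\dots,s_n$. Then the space of square-summable solutions of the half-infinite bulk equation is $$\mathcal M_{1,\infty}\cap\mathcal H=\mathcal F_1^-\oplus\mathbf P_{1,\infty}\bigoplus_{\ell:\,|z_\ell|<1}\big(\ker\mathbf A\cap\mathcal T_{z_\ell,s_\ell}\big).$$
   Context: Fix $d\ge1$, $e_m$ the standard basis of $\mathbb C^d$. $\mathcal V^S_d$: doubly infinite sequences $\Psi=\{\psi_j\}_{j\in\mathbb Z}$, $\psi_j\in\mathbb C^d$. A matrix Laurent polynomial of bandwidth $(p,q)$ is $A(w,w^{-1})=\sum_{r=p}^qa_rw^r$, integers $p\le q$, $a_r$ complex $d\times d$, $a_p\ne0\ne a_q$; its BBL transformation is $(\mathbf A\Psi)_j=\sum_ra_r\psi_{j+r}$; $\mathbf T$ is the left shift $(\mathbf T\Psi)_j=\psi_{j+1}$. $\mathbf A$ is regular if $\det(w^{-p}A(w,w^{-1}))$ is not the zero polynomial. $p'=\min(p,0)$, $q'=\max(0,q)$. $\mathcal V_{L,R}$ = sequences with $\psi_j=0$ for $j\notin[L,R]$, $\mathbf P_{L,R}$ zeroes entries outside $[L,R]$ ($L,R$ possibly infinite). $\mathcal M_{1,\infty}=\ker(\mathbf P_{1-p',\infty}\mathbf A|_{\mathcal V_{1,\infty}})$ (the solutions in $\mathcal V_{1,\infty}$ of the bulk equation of the infinite BBT transformation $\mathbf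 P_{1,\infty}\mathbf A|_{\mathcal V_{1,\infty}}$). $\mathcal F_1^-=\{\Psi\in\mathcal M_{1,\infty}:(\mathbf P_{1,\infty}\mathbf T)^k\Psi=0\text{ for some }k\ge1\}$. For $z\ne0$, $v\ge1$: $\Phi_{z,v}=\{j^{(v-1)}z^{j-v+1}\}_{j\in\mathbb Z}$ with $j^{(0)}=1$, $j^{(k)}=j(j-1)\cdots(j-k+1)$; $\mathcal T_{z,s}=\operatorname{Span}\{\Phi_{z,v}e_m:1\le v\le s,1\le m\le d\}$. $\mathcal H$ is the set of sequences in $\mathcal V_{1,\infty}$ with $\sum_{j\ge1}\|\psi_j\|^2<\infty$. *)

theory Defs
  imports "HOL-Analysis.Analysis" "HOL-Computational_Algebra.Polynomial"
begin

text \<open>Sequences in V^S_d are maps int => complex^'d; the dimension d is the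
cardinality of the finite index type 'd. A matrix Laurent polynomial of
bandwidth (p,q) is given by its coefficient family a :: int => complex^('d::finite)^'d.\<close>

type_synonym 'd seq = "int \<Rightarrow> complex^'d"

definition bbl :: "int \<Rightarrow> int \<Rightarrow> (int \<Rightarrow> complex^('d::finite)^'d) \<Rightarrow> ('d::finite) seq \<Rightarrow> ('d::finite) seq" where
  "bbl p q a \<Psi> = (\<lambda>j. \<Sum>r\<in>{p..q}. a r *v \<Psi> (j + r))"

text \<open>The polynomial matrix w^(-p) A(w,w^(-1)) and its determinant.\<close>
definition symbol_poly_mat :: "int \<Rightarrow> int \<Rightarrow> (int \<Rightarrow> complex^('d::finite)^'d) \<Rightarrow> complex poly^'d^'d" where
  "symbol_poly_mat p q a = (\<chi> i k. \<Sum>r\<in>{p..q}. monom (a r $ i $ k) (nat (r - p)))"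

definition symbol_det :: "int \<Rightarrow> int \<Rightarrow> (int \<Rightarrow> complex^('d::finite)^'d) \<Rightarrow> complex poly" where
  "symbol_det p q a = det (symbol_poly_mat p q a)"

definition regular_bbl :: "int \<Rightarrow> int \<Rightarrow> (int \<Rightarrow> complex^('d::finite)^'d) \<Rightarrow> bool" where
  "regular_bbl p q a \<longleftrightarrow> symbol_det p q a \<noteq> 0"

definition is_laurent_bandwidth :: "int \<Rightarrow> int \<Rightarrow> (int \<Rightarrow> complex^('d::finite)^'d) \<Rightarrow> bool" where
  "is_laurent_bandwidth p q a \<longleftrightarrow> p \<le> q \<and> a p \<noteq> 0 \<and> a q \<noteq> 0 \<and> (\<forall>r. (r < p \<or> q < r) \<longrightarrow> a r = 0)"

definition nonzero_roots :: "int \<Rightarrow> int \<Rightarrow> (int \<Rightarrow> complex^('d::finite)^'d) \<Rightarrow> complex set" where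
  "nonzero_roots p q a = {z. z \<noteq> 0 \<and> poly (symbol_det p q a) z = 0}"

definition root_mult :: "int \<Rightarrow> int \<Rightarrow> (int \<Rightarrow> complex^('d::finite)^'d) \<Rightarrow> complex \<Rightarrow> nat" where
  "root_mult p q a z = order z (symbol_det p q a)"

definition proj :: "int \<Rightarrow> ('d::finite) seq \<Rightarrow> ('d::finite) seq" where
  "proj L \<Psi> = (\<lambda>j. if L \<le> j then \<Psi> j else 0)"

definition shiftT :: "('d::finite) seq \<Rightarrow> ('d::finite) seq" where
  "shiftT \<Psi> = (\<lambda>j. \<Psi> (j + 1))"

definition V1inf :: "('d::finite) seq set" where
  "V1inf = {\<Psi>. \<forall>j<1. \<Psi> j = 0}"

definition M1inf :: "int \<Rightarrow> int \<Rightarrow> (int \<Rightarrow> complex^('d::finite)^'d) \<Rightarrow> ('d::finite) seq set" where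
  "M1inf p q a = {\<Psi> \<in> V1inf. proj (1 - min p 0) (bbl p q a \<Psi>) = (\<lambda>_. 0)}"

definition F1minus :: "int \<Rightarrow> int \<Rightarrow> (int \<Rightarrow> complex^('d::finite)^'d) \<Rightarrow> ('d::finite) seq set" where
  "F1minus p q a = {\<Psi> \<in> M1inf p q a. \<exists>k\<ge>1. ((proj 1 \<circ> shiftT) ^^ k) \<Psi> = (\<lambda>_. 0)}"

definition Hsq :: "('d::finite) seq set" where
  "Hsq = {\<Psi> \<in> V1inf. summable (\<lambda>n::nat. (norm (\<Psi> (int n + 1)))\<^sup>2)}"

definition kerA :: "int \<Rightarrow> int \<Rightarrow> (int \<Rightarrow> complex^('d::finite)^'d) \<Rightarrow> ('d::finite) seq set" where
  "kerA p q a = {\<Psi>. bbl p q a \<Psi> = (\<lambda>_. 0)}"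

definition ffact_int :: "int \<Rightarrow> nat \<Rightarrow> complex" where
  "ffact_int j k = (\<Prod>i<k. of_int j - of_nat i)"

definition Phi :: "complex \<Rightarrow> nat \<Rightarrow> int \<Rightarrow> complex" where
  "Phi z v j = ffact_int j (v - 1) * z powi (j - int v + 1)"

definition Tspace :: "complex \<Rightarrow> nat \<Rightarrow> ('d::finite) seq set" where
  "Tspace z s = {\<Psi>. \<exists>c :: nat \<Rightarrow> 'd \<Rightarrow> complex.
      \<Psi> = (\<lambda>j. \<Sum>v\<in>{1..s}. \<Sum>m\<in>UNIV. axis m (c v m * Phi z v j))}"

end

theory Submission
  imports Defs "HOL-Computational_Algebra.Field_as_Ring" "HOL-Computational_Algebra.Polynomial_Factorial"
    "HOL-Computational_Algebra.Fundamental_Theorem_Algebra"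
begin

definition pop :: "complex poly \<Rightarrow> (int \<Rightarrow> complex) \<Rightarrow> (int \<Rightarrow> complex)" where
  "pop P u = (\<lambda>j. \<Sum>k\<le>degree P. coeff P k * u (j + int k))"

lemma pop_bound: "degree P \<le> N \<Longrightarrow> pop P u j = (\<Sum>k\<le>N. coeff P k * u (j + int k))"
proof -
  assume N: "degree P \<le> N"
  have "(\<Sum>k\<le>N. coeff P k * u (j + int k)) = (\<Sum>k\<le>degree P. coeff P k * u (j + int k))"
    by (rule sum.mono_neutral_right) (use N in \<open>auto intro: coeff_eq_0\<close>)
  then show ?thesis by (simp add: pop_def)
qed

lemma pop_add: "pop (P + Q) u = (\<lambda>j. pop P u j + pop Q u j)"
proof
  fix j
  let ?N = "max (degree P) (degree Q)"
  have "degree (P+Q) \<le> ?N" by (rule degree_add_le) auto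
  then show "pop (P + Q) u j = pop P u j + pop Q u j"
    by (simp add: pop_bound[of _ ?N] sum.distrib distrib_right)
qed

lemma pop_smult: "pop (smult c P) u = (\<lambda>j. c * pop P u j)"
  by (rule ext, subst pop_bound[of _ "degree P"]) (auto simp: pop_def sum_distrib_left mult.assoc)

lemma pop_0 [simp]: "pop 0 u = (\<lambda>_. 0)"
  by (simp add: pop_def)

lemma pop_1 [simp]: "pop 1 u = u"
  by (simp add: pop_def)

lemma pop_const: "pop [:c:] u = (\<lambda>j. c * u j)"
  by (simp add: pop_def)

lemma pop_pCons: "pop (pCons a P) u j = a * u j + pop P u (j + 1)"
proof -
  have "pop (pCons a P) u j = (\<Sum>k\<le>Suc (degree P). coeff (pCons a P) k * u (j + int k))"
    by (rule pop_bound) (simp add: degree_pCons_le)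
  also have "\<dots> = a * u j + (\<Sum>k\<le>degree P. coeff P k * u (j + 1 + int k))"
    by (subst sum.atMost_Suc_shift) (simp add: algebra_simps)
  finally show ?thesis by (simp add: pop_def)
qed

lemma pop_u_add: "pop P (\<lambda>j. u j + v j) = (\<lambda>j. pop P u j + pop P v j)"
  by (auto simp: pop_def sum.distrib distrib_left)

lemma pop_u_diff: "pop P (\<lambda>j. u j - v j) = (\<lambda>j. pop P u j - pop P v j)"
  by (auto simp: pop_def sum_subtractf right_diff_distrib)

lemma pop_u_scale: "pop P (\<lambda>j. c * u j) = (\<lambda>j. c * pop P u j)"
  by (auto simp: pop_def sum_distrib_left ac_simps)

lemma pop_u_sum: "pop P (\<lambda>j. \<Sum>x\<in>S. f x j) = (\<lambda>j. \<Sum>x\<in>S. pop P (f x) j)"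
  by (auto simp: pop_def sum_distrib_left intro!: sum.swap)

lemma pop_u_0 [simp]: "pop P (\<lambda>_. 0) = (\<lambda>_. 0)"
  by (simp add: pop_def)

lemma pop_sum: "pop (\<Sum>x\<in>S. F x) u = (\<lambda>j. \<Sum>x\<in>S. pop (F x) u j)"
proof (induction S rule: infinite_finite_induct)
  case (insert x S) then show ?case by (simp add: pop_add)
qed auto

lemma pop_shift: "pop P (\<lambda>j. u (j + 1)) = (\<lambda>j. pop P u (j + 1))"
  by (auto simp: pop_def ac_simps)

lemma pop_mult: "pop (P * Q) u = pop P (pop Q u)"
proof (induction P arbitrary: u)
  case 0 then show ?case by simp
next
  case (pCons a P)
  have "pop (pCons a P * Q) u = pop (smult a Q + pCons 0 (P * Q)) u" by simp
  also have "\<dots> = (\<lambda>j. a * pop Q u j + pop (P*Q) u (j+1))"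
    by (auto simp: pop_add pop_smult pop_pCons)
  also have "\<dots> = (\<lambda>j. a * pop Q u j + pop P (pop Q u) (j+1))"
    using pCons.IH by simp
  also have "\<dots> = pop (pCons a P) (pop Q u)"
    by (auto simp: pop_pCons)
  finally show ?case .
qed

lemma pop_comm: "pop P (pop Q u) = pop Q (pop P u)"
  by (metis pop_mult mult.commute)

lemma pop_monom: "pop (monom c n) u = (\<lambda>j. c * u (j + int n))"
proof
  fix j
  have "pop (monom c n) u j = (\<Sum>k\<le>n. coeff (monom c n) k * u (j + int k))"
    by (rule pop_bound) (simp add: degree_monom_le)
  also have "\<dots> = (\<Sum>k\<le>n. if k = n then c * u (j + int k) else 0)"
    by (rule sum.cong) (auto simp: coeff_monom)
  also have "\<dots> = c * u (j + int n)"
    by simp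
  finally show "pop (monom c n) u j = c * u (j + int n)" .
qed

lemma pop_ez: "\<forall>j\<ge>J. u j = 0 \<Longrightarrow> \<forall>j\<ge>J. pop P u j = 0"
  by (auto simp: pop_def intro!: sum.neutral)

lemma pop_tz:
  assumes "(\<lambda>n::nat. u (int n)) \<longlonglongrightarrow> 0"
  shows "(\<lambda>n::nat. pop P u (int n)) \<longlonglongrightarrow> 0"
proof -
  have "(\<lambda>n::nat. \<Sum>k\<le>degree P. coeff P k * u (int n + int k)) \<longlonglongrightarrow> (\<Sum>k\<le>degree P. coeff P k * 0)"
  proof (intro tendsto_sum tendsto_mult tendsto_const)
    fix k
    have "(\<lambda>n. u (int (n + k))) \<longlonglongrightarrow> 0"
      using LIMSEQ_ignore_initial_segment[OF assms, of k] by simp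
    then show "(\<lambda>n. u (int n + int k)) \<longlonglongrightarrow> 0" by simp
  qed
  then show ?thesis by (simp add: pop_def)
qed

abbreviation X :: "complex \<Rightarrow> complex poly" where "X z \<equiv> [:-z, 1:]"

lemma pop_X: "pop (X z) u j = u (j + 1) - z * u j"
  by (simp add: pop_pCons pop_const)

lemma ker1_ev:
  assumes "\<forall>j\<ge>J. pop (X z) u j = 0"
  shows "u (J + int n) = u J * z ^ n"
proof (induction n)
  case (Suc n)
  have "pop (X z) u (J + int n) = 0" using assms by simp
  then have "u (J + int n + 1) = z * u (J + int n)" by (simp add: pop_X)
  then show ?case using Suc by (simp add: algebra_simps)
qed simp

lemma ker1_glob:
  assumes "\<forall>j. pop (X z) u j = 0" and z: "z \<noteq> 0"
  shows "u j = u 0 * z powi j"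
proof (induction j rule: int_induct[where k=0])
  case base then show ?case by simp
next
  case (step1 i)
  have "u (i + 1) = z * u i" using assms(1) by (simp add: pop_X)
  then show ?case using step1 z by (simp add: power_int_add algebra_simps)
next
  case (step2 i)
  have "u (i - 1 + 1) = z * u (i - 1)" using assms(1)[rule_format, of "i - 1"] by (simp add: pop_X)
  then have "u (i - 1) = u i / z" using z by (simp add: field_simps)
  then show ?case using step2 z by (simp add: power_int_diff field_simps)
qed

lemma pop_ez_pCons:
  assumes "\<forall>j\<ge>J. u j = 0" and "\<forall>j. pop P u j = 0" and "coeff P 0 \<noteq> 0"
  shows "u j = 0"
proof -
  obtain a P' where P: "P = pCons a P'" by (cases P) auto
  have a: "a \<noteq> 0" using assms(3) P by simp
  have "\<forall>j\<ge>J - int n. u j = 0" for n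
  proof (induction n)
    case 0 then show ?case using assms(1) by simp
  next
    case (Suc n)
    show ?case
    proof (intro allI impI)
      fix j assume j: "J - int (Suc n) \<le> j"
      show "u j = 0"
      proof (cases "j \<ge> J - int n")
        case True then show ?thesis using Suc by simp
      next
        case False
        then have "\<forall>t\<ge>j+1. u t = 0" using Suc j False by auto
        then have "pop P' u (j+1) = 0" using pop_ez by blast
        moreover have "pop P u j = a * u j + pop P' u (j+1)" using P pop_pCons by simp
        ultimately show ?thesis using assms(2) a by simp
      qed
    qed
  qed
  from this[of "nat (J - j)"] show ?thesis by simp
qed

lemma coeff0_Xpow: "coeff (X z ^ s) 0 = (- z) ^ s"
  by (simp add: coeff_0_power)

lemma Z_lemma:
  assumes "\<forall>j. pop (X z ^ s) u j = 0" "z \<noteq> 0" "\<forall>j\<ge>J. u j = 0"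
  shows "u j = 0"
  using pop_ez_pCons[OF assms(3) assms(1)] assms(2) by (simp add: coeff0_Xpow)

lemma U_lemma:
  assumes "\<forall>j. pop (X z ^ s) u j = 0" "norm z \<ge> 1" "(\<lambda>n::nat. u (int n)) \<longlonglongrightarrow> 0"
  shows "u j = 0"
  using assms(1,3)
proof (induction s arbitrary: u j)
  case 0 then show ?case by simp
next
  case (Suc s)
  define v where "v = pop (X z ^ s) u"
  have z: "z \<noteq> 0" using assms(2) by auto
  have eq: "pop (X z ^ Suc s) u = pop (X z) v"
    unfolding v_def power_Suc by (rule pop_mult)
  have "\<forall>j. pop (X z) v j = 0" using Suc.prems(1) unfolding eq .
  then have vj: "v j = v 0 * z powi j" for j using ker1_glob z by blast
  have "(\<lambda>n::nat. v (int n)) \<longlonglongrightarrow> 0" unfolding v_def by (rule pop_tz[OF Suc.prems(2)])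
  then have t: "(\<lambda>n::nat. norm (v (int n))) \<longlonglongrightarrow> 0" by (rule tendsto_norm_zero)
  have "norm (v 0) \<le> norm (v (int n))" for n
  proof -
    have "v (int n) = v 0 * z ^ n" using vj[of "int n"] by (simp only: power_int_of_nat)
    then have "norm (v (int n)) = norm (v 0) * norm z ^ n" by (simp only: norm_mult norm_power)
    moreover have "1 \<le> norm z ^ n" using assms(2) by (rule one_le_power)
    ultimately show ?thesis using mult_left_mono[of 1 "norm z ^ n" "norm (v 0)"] by simp
  qed
  then have "norm (v 0) \<le> 0" using LIMSEQ_le_const[OF t, of "norm (v 0)"] by blast
  then have v0: "v 0 = 0" by simp
  have "\<forall>j. v j = 0"
  proof
    fix j show "v j = 0" using vj[of j] v0 by simp
  qed
  then have "\<forall>j. pop (X z ^ s) u j = 0" by (simp add: v_def)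
  then show ?case using Suc.IH Suc.prems(2) by blast
qed

lemma ffact_Suc: "ffact_int j (Suc k) = ffact_int j k * (of_int j - of_nat k)"
  by (simp add: ffact_int_def)

lemma ffact_shift: "ffact_int (j+1) (Suc k) = (of_int j + 1) * ffact_int j k"
  unfolding ffact_int_def by (subst prod.lessThan_Suc_shift) (simp add: algebra_simps)

lemma ffact_0 [simp]: "ffact_int j 0 = 1"
  by (simp add: ffact_int_def)

lemma Phi1: "Phi z 1 j = z powi j"
  by (simp add: Phi_def)

lemma Phi1': "Phi z (Suc 0) j = z powi j"
  by (simp add: Phi_def)

lemma powi_mul_z: "z \<noteq> 0 \<Longrightarrow> z powi (m + 1) = z powi m * (z::complex)"
  by (simp add: power_int_add)

lemma phi1_ker: "z \<noteq> 0 \<Longrightarrow> pop (X z) (Phi z 1) j = 0"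
  by (simp only: pop_X Phi1) (simp add: power_int_add)

lemma phi_diff:
  assumes z: "z \<noteq> 0"
  shows "pop (X z) (Phi z (Suc (Suc k))) j = of_nat (Suc k) * Phi z (Suc k) j"
proof -
  have e1: "z powi (j + 1 - int (Suc (Suc k)) + 1) = z powi (j - int k)" by (simp add: algebra_simps)
  have "z * z powi (j - int (Suc (Suc k)) + 1) = z powi (j - int (Suc (Suc k)) + 1 + 1)"
    using powi_mul_z[OF z, of "j - int (Suc (Suc k)) + 1"] by (simp only: mult.commute)
  also have "j - int (Suc (Suc k)) + 1 + 1 = j - int k" by simp
  finally have e2: "z * z powi (j - int (Suc (Suc k)) + 1) = z powi (j - int k)" .
  have "pop (X z) (Phi z (Suc (Suc k))) j
      = ffact_int (j+1) (Suc k) * z powi (j - int k) - ffact_int j (Suc k) * z powi (j - int k)"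
    unfolding pop_X Phi_def using e1 e2 by (simp add: algebra_simps)
  also have "\<dots> = of_nat (Suc k) * (ffact_int j k * z powi (j - int k))"
    by (subst ffact_shift, subst ffact_Suc, simp add: algebra_simps)
  also have "\<dots> = of_nat (Suc k) * Phi z (Suc k) j"
    by (simp add: Phi_def)
  finally show ?thesis .
qed

definition Tf :: "complex \<Rightarrow> nat \<Rightarrow> (nat \<Rightarrow> complex) \<Rightarrow> int \<Rightarrow> complex" where
  "Tf z s c j = (\<Sum>v\<in>{1..s}. c v * Phi z v j)"

lemma pop_X_Tf:
  assumes z: "z \<noteq> 0"
  shows "pop (X z) (Tf z (Suc s) c) = Tf z s (\<lambda>v. c (Suc v) * of_nat v)"
proof
  fix j
  have "pop (X z) (Tf z (Suc s) c) j = (\<Sum>v\<in>{1..Suc s}. c v * pop (X z) (Phi z v) j)"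
    unfolding Tf_def pop_u_sum pop_u_scale ..
  also have "\<dots> = c 1 * pop (X z) (Phi z 1) j + (\<Sum>v\<in>{1..s}. c (Suc v) * pop (X z) (Phi z (Suc v)) j)"
    by (subst sum.atLeast_Suc_atMost[of 1 "Suc s"], simp, subst sum.shift_bounds_cl_Suc_ivl[symmetric], simp)
  also have "\<dots> = (\<Sum>v\<in>{1..s}. c (Suc v) * of_nat v * Phi z v j)"
  proof -
    have "c (Suc v) * pop (X z) (Phi z (Suc v)) j = c (Suc v) * of_nat v * Phi z v j" if v: "v \<in> {1..s}" for v
    proof -
      obtain k where "v = Suc k" using v by (cases v) auto
      then show ?thesis using phi_diff[OF z, of k j] by simp
    qed
    then have "(\<Sum>v\<in>{1..s}. c (Suc v) * pop (X z) (Phi z (Suc v)) j) = (\<Sum>v\<in>{1..s}. c (Suc v) * of_nat v * Phi z v j)"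
      by (rule sum.cong[OF refl])
    then show ?thesis using phi1_ker[OF z, of j] by simp
  qed
  finally show "pop (X z) (Tf z (Suc s) c) j = Tf z s (\<lambda>v. c (Suc v) * of_nat v) j"
    by (simp add: Tf_def)
qed

lemma T_ker:
  assumes z: "z \<noteq> 0"
  shows "pop (X z ^ s) (Tf z s c) j = 0"
proof (induction s arbitrary: c j)
  case 0 then show ?case by (simp add: Tf_def)
next
  case (Suc s)
  have "pop (X z ^ Suc s) (Tf z (Suc s) c) = pop (X z ^ s) (pop (X z) (Tf z (Suc s) c))"
    by (simp add: pop_mult[symmetric] power_Suc2)
  then show ?case using Suc pop_X_Tf[OF z] by simp
qed

lemma L_ev:
  assumes z: "z \<noteq> 0"
  shows "\<forall>j\<ge>J. pop (X z ^ s) h j = 0 \<Longrightarrow> \<exists>c. \<forall>j\<ge>J. h j = Tf z s c j"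
proof (induction s arbitrary: h)
  case 0 then show ?case by (simp add: Tf_def)
next
  case (Suc s)
  have "\<forall>j\<ge>J. pop (X z ^ s) (pop (X z) h) j = 0"
    using Suc.prems by (simp add: pop_mult[symmetric] power_Suc2)
  then obtain c where c: "\<forall>j\<ge>J. pop (X z) h j = Tf z s c j" using Suc.IH by blast
  define c' where "c' = (\<lambda>v. if v = 0 then 0 else c (v - 1) / of_nat (v - 1))"
  define w where "w = Tf z (Suc s) c'"
  have pw: "pop (X z) w = Tf z s c"
  proof -
    have "(\<lambda>v. c' (Suc v) * of_nat v) v = c v" if "v \<in> {1..s}" for v
      using that by (auto simp: c'_def)
    then have "Tf z s (\<lambda>v. c' (Suc v) * of_nat v) = Tf z s c"
      unfolding Tf_def by (auto intro!: ext sum.cong)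
    then show ?thesis unfolding w_def using pop_X_Tf[OF z] by simp
  qed
  define u where "u = (\<lambda>j. h j - w j)"
  have "\<forall>j\<ge>J. pop (X z) u j = 0"
    using c pw by (simp add: u_def pop_u_diff)
  then have uJ: "u (J + int n) = u J * z ^ n" for n using ker1_ev by blast
  define c'' where "c'' = c'(1 := u J * z powi (- J))"
  have "h j = Tf z (Suc s) c'' j" if j: "j \<ge> J" for j
  proof -
    obtain n where n: "j = J + int n" using j by (intro that[of "nat (j - J)"]) simp
    have "u j = u J * z powi (j - J)" using uJ[of n] n by (simp add: power_int_def)
    also have "\<dots> = (u J * z powi (- J)) * Phi z 1 j"
      using z by (simp add: Phi1' power_int_add[symmetric])
    finally have uj: "u j = c'' 1 * Phi z 1 j" by (simp add: c''_def)
    have "Tf z (Suc s) c'' j = c'' 1 * Phi z 1 j + (\<Sum>v\<in>{2..Suc s}. c'' v * Phi z v j)"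
      unfolding Tf_def by (subst sum.atLeast_Suc_atMost[of 1 "Suc s"]) (auto simp: numeral_2_eq_2)
    also have "(\<Sum>v\<in>{2..Suc s}. c'' v * Phi z v j) = (\<Sum>v\<in>{2..Suc s}. c' v * Phi z v j)"
      by (rule sum.cong) (auto simp: c''_def)
    also have "\<dots> = w j"
    proof -
      have "w j = c' 1 * Phi z 1 j + (\<Sum>v\<in>{Suc 1..Suc s}. c' v * Phi z v j)"
        unfolding w_def Tf_def by (rule sum.atLeast_Suc_atMost) simp
      then show ?thesis by (simp add: c'_def numeral_2_eq_2)
    qed
    finally have "Tf z (Suc s) c'' j = c'' 1 * Phi z 1 j + w j" .
    then show ?thesis using uj unfolding u_def by (metis diff_add_cancel add.commute)
  qed
  then show ?case by blast
qed

lemma coprime_X: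
  assumes "a \<noteq> b" shows "coprime (X a) (X b)"
proof (rule coprimeI)
  fix c assume c1: "c dvd X a" and c2: "c dvd X b"
  have "X a - X b = [:b - a:]" by simp
  then have "c dvd [:b - a:]" using dvd_diff[OF c1 c2] by simp
  moreover have "is_unit [:b - a:]" using assms by (simp add: is_unit_const_poly_iff dvd_field_iff)
  ultimately show "is_unit c" by (rule dvd_unit_imp_unit)
qed

lemma coprime_Xpow: "a \<noteq> b \<Longrightarrow> coprime (X a ^ m) (X b ^ n)"
  using coprime_X by simp

lemma coprime_Xpow_prod:
  assumes "z0 \<notin> Z" shows "coprime (X z0 ^ m) (\<Prod>z\<in>Z. X z ^ s z)"
proof (rule prod_coprime_right)
  fix z assume "z \<in> Z"
  then have "z0 \<noteq> z" using assms by auto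
  then show "coprime (X z0 ^ m) (X z ^ s z)" by (rule coprime_Xpow)
qed

lemma bezout_poly:
  assumes "coprime F (G::complex poly)" shows "\<exists>\<alpha> \<beta>. \<alpha> * F + \<beta> * G = 1"
  using bezout_coefficients_fst_snd[of F G] assms by (metis coprime_imp_gcd_eq_1)

lemma pop_zero_fun: "(\<forall>j. pop P u j = 0) \<Longrightarrow> pop P u = (\<lambda>_. 0)"
  by auto

lemma iso:
  assumes fin: "finite Z" and z0: "z0 \<in> Z"
  shows "\<exists>R. \<forall>g. (\<forall>z\<in>Z. \<forall>j. pop (X z ^ s z) (g z) j = 0) \<longrightarrow> g z0 = pop R (\<lambda>j. \<Sum>z\<in>Z. g z j)"
proof -
  define F where "F = X z0 ^ s z0"
  define G where "G = (\<Prod>z\<in>Z-{z0}. X z ^ s z)"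
  have "coprime F G" unfolding F_def G_def by (rule coprime_Xpow_prod) simp
  then obtain \<alpha> \<beta> where ab: "\<alpha> * F + \<beta> * G = 1" using bezout_poly by blast
  show ?thesis
  proof (intro exI allI impI)
    fix g assume g: "\<forall>z\<in>Z. \<forall>j. pop (X z ^ s z) (g z) j = 0"
    have g': "pop (X z ^ s z) (g z) = (\<lambda>_. 0)" if "z \<in> Z" for z using g that by auto
    have zero: "pop (\<beta> * G) (g z) = (\<lambda>_. 0)" if z: "z \<in> Z - {z0}" for z
    proof -
      have "G = X z ^ s z * (\<Prod>z\<in>Z-{z0}-{z}. X z ^ s z)"
        unfolding G_def using z fin by (simp add: prod.remove)
      then have "\<beta> * G = (\<beta> * (\<Prod>z\<in>Z-{z0}-{z}. X z ^ s z)) * X z ^ s z" by (simp add: ac_simps)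
      then have "pop (\<beta> * G) (g z) = pop (\<beta> * (\<Prod>z\<in>Z-{z0}-{z}. X z ^ s z)) (pop (X z ^ s z) (g z))"
        by (simp only: pop_mult)
      then show ?thesis using g' z by simp
    qed
    have self: "pop (\<beta> * G) (g z0) = g z0"
    proof -
      have "pop (\<alpha> * F + \<beta> * G) (g z0) = g z0" using ab by simp
      moreover have "pop (\<alpha> * F) (g z0) = (\<lambda>_. 0)"
        using g'[OF z0] by (simp add: pop_mult F_def)
      ultimately show ?thesis by (simp add: pop_add)
    qed
    have "pop (\<beta> * G) (\<lambda>j. \<Sum>z\<in>Z. g z j) = (\<lambda>j. \<Sum>z\<in>Z. pop (\<beta> * G) (g z) j)"
      by (rule pop_u_sum)
    also have "\<dots> = (\<lambda>j. pop (\<beta> * G) (g z0) j + (\<Sum>z\<in>Z-{z0}. pop (\<beta> * G) (g z) j))"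
      using fin z0 by (simp add: sum.remove)
    also have "\<dots> = g z0"
      using zero self by simp
    finally show "g z0 = pop (\<beta> * G) (\<lambda>j. \<Sum>z\<in>Z. g z j)" by simp
  qed
qed

lemma dec:
  assumes "finite R"
  shows "\<forall>j\<ge>J. pop (\<Prod>r\<in>R. X r ^ s r) \<Psi> j = 0 \<Longrightarrow>
    \<exists>g. (\<forall>r\<in>R. \<forall>j\<ge>J. pop (X r ^ s r) (g r) j = 0) \<and> (\<forall>j\<ge>J. \<Psi> j = (\<Sum>r\<in>R. g r j))"
  using assms
proof (induction R arbitrary: \<Psi> rule: finite_induct)
  case empty then show ?case by simp
next
  case (insert r0 R)
  define F where "F = X r0 ^ s r0"
  define G where "G = (\<Prod>z\<in>R. X z ^ s z)"
  have FG: "(\<Prod>r\<in>insert r0 R. X r ^ s r) = F * G"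
    using insert by (simp add: F_def G_def)
  have "coprime F G" unfolding F_def G_def by (rule coprime_Xpow_prod) (use insert in simp)
  then obtain \<alpha> \<beta> where ab: "\<alpha> * F + \<beta> * G = 1" using bezout_poly by blast
  define \<Psi>1 where "\<Psi>1 = pop (\<beta> * G) \<Psi>"
  define \<Psi>2 where "\<Psi>2 = pop (\<alpha> * F) \<Psi>"
  have sum12: "\<Psi> j = \<Psi>1 j + \<Psi>2 j" for j
  proof -
    have "pop (\<alpha> * F + \<beta> * G) \<Psi> = \<Psi>" using ab by simp
    then show ?thesis unfolding \<Psi>1_def \<Psi>2_def pop_add by (metis add.commute)
  qed
  have ez: "\<forall>j\<ge>J. pop (F * G) \<Psi> j = 0" using insert.prems FG by simp
  have "pop F \<Psi>1 = pop \<beta> (pop (F * G) \<Psi>)"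
    unfolding \<Psi>1_def pop_mult[symmetric] by (simp add: ac_simps)
  then have e1: "\<forall>j\<ge>J. pop F \<Psi>1 j = 0" using pop_ez[OF ez] by simp
  have "pop G \<Psi>2 = pop \<alpha> (pop (F * G) \<Psi>)"
    unfolding \<Psi>2_def pop_mult[symmetric] by (simp add: ac_simps)
  then have e2: "\<forall>j\<ge>J. pop G \<Psi>2 j = 0" using pop_ez[OF ez] by simp
  obtain g where g: "\<forall>r\<in>R. \<forall>j\<ge>J. pop (X r ^ s r) (g r) j = 0" "\<forall>j\<ge>J. \<Psi>2 j = (\<Sum>r\<in>R. g r j)"
    using insert.IH[of \<Psi>2] e2 unfolding G_def by blast
  define g' where "g' = g(r0 := \<Psi>1)"
  have "\<forall>r\<in>insert r0 R. \<forall>j\<ge>J. pop (X r ^ s r) (g' r) j = 0"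
    using g(1) e1 insert.hyps(2) by (auto simp: g'_def F_def)
  moreover have "\<forall>j\<ge>J. \<Psi> j = (\<Sum>r\<in>insert r0 R. g' r j)"
  proof (intro allI impI)
    fix j assume j: "J \<le> j"
    have "(\<Sum>r\<in>R. g' r j) = (\<Sum>r\<in>R. g r j)"
      using insert.hyps(2) by (intro sum.cong) (auto simp: g'_def)
    then show "\<Psi> j = (\<Sum>r\<in>insert r0 R. g' r j)"
      using insert.hyps g(2) j sum12[of j] by (simp add: g'_def)
  qed
  ultimately show ?case by blast
qed

definition cof :: "'a::comm_ring_1^'n^'n \<Rightarrow> 'n \<Rightarrow> 'n \<Rightarrow> 'a" where
  "cof M k i = det (\<chi> r. if r = k then axis i 1 else row r M)"

lemma adj_row: "(\<Sum>i\<in>UNIV. M$m$i * cof M k i) = (if m = k then det M else 0)"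
proof -
  have "(\<Sum>i\<in>UNIV. M$m$i * cof M k i)
      = (\<Sum>i\<in>UNIV. det (\<chi> r. if r = k then M$m$i *s axis i 1 else row r M))"
    unfolding cof_def by (simp add: det_row_mul)
  also have "\<dots> = det (\<chi> r. if r = k then (\<Sum>i\<in>UNIV. M$m$i *s axis i 1) else row r M)"
    by (rule det_linear_row_sum[symmetric]) simp
  also have "(\<Sum>i\<in>UNIV. M$m$i *s axis i (1::'a)) = row m M"
  proof -
    have "\<And>i x. M$m$x * (if i = x then 1 else 0) = (if i = x then M$m$x else 0)" by simp
    then show ?thesis by (simp add: vec_eq_iff row_def axis_def)
  qed
  finally have e: "(\<Sum>i\<in>UNIV. M$m$i * cof M k i) = det (\<chi> r. if r = k then row m M else row r M)" .
  show ?thesis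
  proof (cases "m = k")
    case True
    have "(\<chi> r. if r = k then row m M else row r M) = M"
      using True by (simp add: vec_eq_iff row_def)
    then show ?thesis using e True by simp
  next
    case False
    have "det (\<chi> r. if r = k then row m M else row r M) = 0"
      by (rule det_identical_rows[of k m]) (use False in \<open>auto simp: row_def vec_eq_iff\<close>)
    then show ?thesis using e False by simp
  qed
qed

lemma left_adj: "(\<Sum>i\<in>UNIV. cof (transpose M) k i * M$i$m) = (if m = k then det M else 0)"
proof -
  have t: "transpose M $ i $ j = M $ j $ i" for i j by (simp add: transpose_def)
  show ?thesis using adj_row[of "transpose M" m k] by (simp add: t mult.commute)
qed

definition cmp :: "('d::finite) seq \<Rightarrow> 'd \<Rightarrow> int \<Rightarrow> complex" where
  "cmp \<Psi> k = (\<lambda>j. \<Psi> j $ k)"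

lemma pop_B:
  assumes "p \<le> q"
  shows "pop (symbol_poly_mat p q a $ i $ k) u j = (\<Sum>r\<in>{p..q}. a r $ i $ k * u (j - p + r))"
proof -
  have "pop (symbol_poly_mat p q a $ i $ k) u j = (\<Sum>r\<in>{p..q}. pop (monom (a r $ i $ k) (nat (r - p))) u j)"
    unfolding symbol_poly_mat_def by (simp add: pop_sum)
  also have "\<dots> = (\<Sum>r\<in>{p..q}. a r $ i $ k * u (j - p + r))"
    by (rule sum.cong) (auto simp: pop_monom algebra_simps)
  finally show ?thesis .
qed

lemma B_bbl:
  assumes "p \<le> q"
  shows "(\<Sum>k\<in>UNIV. pop (symbol_poly_mat p q a $ i $ k) (cmp \<Psi> k) j) = bbl p q a \<Psi> (j - p) $ i"
proof -
  have "(\<Sum>k\<in>UNIV. pop (symbol_poly_mat p q a $ i $ k) (cmp \<Psi> k) j)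
     = (\<Sum>k\<in>UNIV. \<Sum>r\<in>{p..q}. a r $ i $ k * \<Psi> (j - p + r) $ k)"
    by (simp add: pop_B[OF assms] cmp_def)
  also have "\<dots> = (\<Sum>r\<in>{p..q}. \<Sum>k\<in>UNIV. a r $ i $ k * \<Psi> (j - p + r) $ k)"
    by (rule sum.swap)
  also have "\<dots> = bbl p q a \<Psi> (j - p) $ i"
    by (simp add: bbl_def matrix_vector_mult_def)
  finally show ?thesis .
qed

lemma det_ez:
  assumes pq: "p \<le> q" and ez: "\<forall>j\<ge>J0. bbl p q a \<Psi> j = 0"
  shows "\<forall>j\<ge>J0 + p. pop (symbol_det p q a) (cmp \<Psi> k) j = 0"
proof -
  define B where "B = symbol_poly_mat p q a"
  define w where "w = (\<lambda>i j. \<Sum>m\<in>UNIV. pop (B $ i $ m) (cmp \<Psi> m) j)"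
  have wz: "\<forall>j\<ge>J0 + p. w i j = 0" for i
    unfolding w_def B_def using ez by (simp add: B_bbl[OF pq])
  have "(\<lambda>j. \<Sum>i\<in>UNIV. pop (cof (transpose B) k i) (w i) j)
      = (\<lambda>j. \<Sum>i\<in>UNIV. \<Sum>m\<in>UNIV. pop (cof (transpose B) k i * B $ i $ m) (cmp \<Psi> m) j)"
    unfolding w_def by (simp add: pop_u_sum pop_mult)
  also have "\<dots> = (\<lambda>j. \<Sum>m\<in>UNIV. pop (\<Sum>i\<in>UNIV. cof (transpose B) k i * B $ i $ m) (cmp \<Psi> m) j)"
    by (rule ext, subst sum.swap, simp add: pop_sum)
  also have "\<dots> = (\<lambda>j. \<Sum>m\<in>UNIV. pop (if m = k then det B else 0) (cmp \<Psi> m) j)"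
    by (simp add: left_adj)
  also have "\<dots> = pop (det B) (cmp \<Psi> k)"
  proof (rule ext)
    fix j
    have "\<And>m. pop (if m = k then det B else 0) (cmp \<Psi> m) j = (if m = k then pop (det B) (cmp \<Psi> k) j else 0)"
      by auto
    then show "(\<Sum>m\<in>UNIV. pop (if m = k then det B else 0) (cmp \<Psi> m) j) = pop (det B) (cmp \<Psi> k) j"
      by simp
  qed
  finally have eq: "pop (det B) (cmp \<Psi> k) = (\<lambda>j. \<Sum>i\<in>UNIV. pop (cof (transpose B) k i) (w i) j)" by simp
  show ?thesis
  proof (intro allI impI)
    fix j assume j: "J0 + p \<le> j"
    have "pop (cof (transpose B) k i) (w i) j = 0" for i using pop_ez[OF wz[of i]] j by blast
    then show "pop (symbol_det p q a) (cmp \<Psi> k) j = 0"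
      using eq by (simp add: symbol_det_def B_def)
  qed
qed

lemma mv_sum: "A *v (\<Sum>x\<in>S. f x) = (\<Sum>x\<in>S. A *v f x)"
  by (induction S rule: infinite_finite_induct) (auto simp: matrix_vector_right_distrib)

lemma pop_X0': "pop [:0, 1:] u j = u (j + 1)"
  using pop_X[of 0 u j] by simp


lemma pop_X0: "pop (X 0 ^ n) u j = u (j + int n)"
proof (induction n arbitrary: j)
  case 0 then show ?case by simp
next
  case (Suc n)
  have "pop (X 0 ^ Suc n) u j = pop (X 0) (pop (X 0 ^ n) u) j"
    by (simp only: power_Suc pop_mult)
  also have "\<dots> = u (j + int (Suc n))" using Suc by (simp add: pop_X0' ac_simps)
  finally show ?case .
qed

lemma sol:
  fixes a :: "int \<Rightarrow> complex^'d::finite^'d"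
  assumes pq: "p \<le> q" and reg: "symbol_det p q a \<noteq> 0" and ez: "\<forall>j\<ge>J0. bbl p q a \<Psi> j = 0"
  shows "\<exists>J C. \<forall>k j. j \<ge> J \<longrightarrow> \<Psi> j $ k = (\<Sum>r\<in>nonzero_roots p q a. Tf r (root_mult p q a r) (C k r) j)"
proof -
  define D where "D = symbol_det p q a"
  define Rt where "Rt = {z. poly D z = 0}"
  define s where "s = (\<lambda>z. order z D)"
  have fin: "finite Rt" unfolding Rt_def D_def using reg by (rule poly_roots_finite)
  have dec0: "smult (lead_coeff D) (\<Prod>z\<in>Rt. X z ^ s z) = D"
    unfolding Rt_def s_def by (rule complex_poly_decompose)
  have lc: "lead_coeff D \<noteq> 0" using reg by (simp add: D_def)
  define J1 where "J1 = J0 + p"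
  define J where "J = J1 + int (s 0)"
  have NZ: "nonzero_roots p q a = Rt - {0}"
    by (auto simp: nonzero_roots_def Rt_def D_def)
  have "\<forall>k. \<exists>Ck. \<forall>j\<ge>J. \<Psi> j $ k = (\<Sum>r\<in>nonzero_roots p q a. Tf r (root_mult p q a r) (Ck r) j)"
  proof
    fix k
    have "\<forall>j\<ge>J1. pop D (cmp \<Psi> k) j = 0"
      using det_ez[OF pq ez] unfolding D_def J1_def by blast
    then have "\<forall>j\<ge>J1. pop (\<Prod>z\<in>Rt. X z ^ s z) (cmp \<Psi> k) j = 0"
      using lc by (subst (asm) dec0[symmetric]) (simp add: pop_smult)
    then obtain g where g1: "\<forall>r\<in>Rt. \<forall>j\<ge>J1. pop (X r ^ s r) (g r) j = 0"
      and g2: "\<forall>j\<ge>J1. cmp \<Psi> k j = (\<Sum>r\<in>Rt. g r j)"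
      using dec[OF fin] by blast
    have "\<forall>r\<in>Rt - {0}. \<exists>c. \<forall>j\<ge>J1. g r j = Tf r (s r) c j"
      using g1 L_ev by blast
    then obtain Ck where Ck: "\<forall>r\<in>Rt - {0}. \<forall>j\<ge>J1. g r j = Tf r (s r) (Ck r) j"
      by metis
    have g0: "g 0 j = 0" if "0 \<in> Rt" "j \<ge> J" for j
    proof -
      have "pop (X 0 ^ s 0) (g 0) (j - int (s 0)) = 0" using g1 that by (auto simp: J_def)
      then show ?thesis using pop_X0[of "s 0" "g 0" "j - int (s 0)"] by simp
    qed
    have "\<forall>j\<ge>J. \<Psi> j $ k = (\<Sum>r\<in>nonzero_roots p q a. Tf r (root_mult p q a r) (Ck r) j)"
    proof (intro allI impI)
      fix j assume j: "J \<le> j"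
      then have jJ1: "J1 \<le> j" by (simp add: J_def)
      have "\<Psi> j $ k = (\<Sum>r\<in>Rt. g r j)" using g2 jJ1 by (simp add: cmp_def)
      also have "\<dots> = (\<Sum>r\<in>Rt - {0}. g r j)"
      proof (cases "0 \<in> Rt")
        case True then show ?thesis using g0[OF True j] fin by (simp add: sum.remove)
      next
        case False then show ?thesis by simp
      qed
      also have "\<dots> = (\<Sum>r\<in>Rt - {0}. Tf r (s r) (Ck r) j)"
        using Ck jJ1 by (intro sum.cong) auto
      finally show "\<Psi> j $ k = (\<Sum>r\<in>nonzero_roots p q a. Tf r (root_mult p q a r) (Ck r) j)"
        by (simp add: NZ s_def root_mult_def D_def)
    qed
    then show "\<exists>Ck. \<forall>j\<ge>J. \<Psi> j $ k = (\<Sum>r\<in>nonzero_roots p q a. Tf r (root_mult p q a r) (Ck r) j)" by blast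
  qed
  then obtain C where "\<forall>k. \<forall>j\<ge>J. \<Psi> j $ k = (\<Sum>r\<in>nonzero_roots p q a. Tf r (root_mult p q a r) (C k r) j)"
    by metis
  then show ?thesis by blast
qed

lemma pop_shiftn: "pop P (\<lambda>j. u (j + r)) = (\<lambda>j. pop P u (j + r))"
  by (auto simp: pop_def ac_simps)

lemma cmp_bbl: "cmp (bbl p q a \<Psi>) i = (\<lambda>j. \<Sum>r\<in>{p..q}. \<Sum>k\<in>UNIV. a r $ i $ k * cmp \<Psi> k (j + r))"
  by (auto simp: cmp_def bbl_def matrix_vector_mult_def)

lemma pop_bbl:
  "pop P (cmp (bbl p q a \<Psi>) i) j = (\<Sum>r\<in>{p..q}. \<Sum>k\<in>UNIV. a r $ i $ k * pop P (cmp \<Psi> k) (j + r))"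
proof -
  have "pop P (cmp (bbl p q a \<Psi>) i) = (\<lambda>j. \<Sum>r\<in>{p..q}. \<Sum>k\<in>UNIV. a r $ i $ k * pop P (cmp \<Psi> k) (j + r))"
    unfolding cmp_bbl pop_u_sum pop_u_scale
    by (simp add: pop_shiftn[of P "cmp \<Psi> _"])
  then show ?thesis by simp
qed

lemma pop_bbl_zero:
  assumes "\<forall>k j. pop P (cmp \<Psi> k) j = 0"
  shows "pop P (cmp (bbl p q a \<Psi>) i) j = 0"
  using assms by (simp add: pop_bbl)

lemma bbl_sum: "bbl p q a (\<lambda>t. \<Sum>x\<in>S. f x t) j = (\<Sum>x\<in>S. bbl p q a (f x) j)"
proof -
  have "bbl p q a (\<lambda>t. \<Sum>x\<in>S. f x t) j = (\<Sum>r\<in>{p..q}. \<Sum>x\<in>S. a r *v f x (j + r))"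
    by (simp add: bbl_def mv_sum)
  also have "\<dots> = (\<Sum>x\<in>S. bbl p q a (f x) j)"
    by (simp add: bbl_def sum.swap[of _ "{p..q}"])
  finally show ?thesis .
qed

lemma bbl_add: "bbl p q a (\<lambda>t. u t + v t) j = bbl p q a u j + bbl p q a v j"
  by (simp add: bbl_def matrix_vector_right_distrib sum.distrib)

lemma bbl_diff: "bbl p q a (\<lambda>t. u t - v t) j = bbl p q a u j - bbl p q a v j"
  by (simp add: bbl_def matrix_vector_mult_diff_distrib sum_subtractf)

lemma bbl_local:
  assumes "\<forall>t\<ge>j + p. u t = v t"
  shows "bbl p q a u j = bbl p q a v j"
  unfolding bbl_def using assms by (intro sum.cong) auto

lemma Tspace_iff:
  "\<Psi> \<in> Tspace z s \<longleftrightarrow> (\<exists>c. \<forall>j k. \<Psi> j $ k = Tf z s (\<lambda>v. c v k) j)"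
proof -
  have cmp: "(\<Sum>v\<in>{1..s}. \<Sum>m\<in>UNIV. axis m (c v m * Phi z v j)) $ k = Tf z s (\<lambda>v. c v k) j"
    for c :: "nat \<Rightarrow> 'a \<Rightarrow> complex" and j and k :: 'a
  proof -
    have "\<And>v m. axis m (c v m * Phi z v j) $ k = (if m = k then c v k * Phi z v j else 0)"
      by (auto simp: axis_def)
    then show ?thesis by (simp add: Tf_def)
  qed
  show ?thesis
  proof
    assume "\<Psi> \<in> Tspace z s"
    then obtain c where "\<Psi> = (\<lambda>j. \<Sum>v\<in>{1..s}. \<Sum>m\<in>UNIV. axis m (c v m * Phi z v j))"
      unfolding Tspace_def by blast
    then show "\<exists>c. \<forall>j k. \<Psi> j $ k = Tf z s (\<lambda>v. c v k) j" using cmp by auto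
  next
    assume "\<exists>c. \<forall>j k. \<Psi> j $ k = Tf z s (\<lambda>v. c v k) j"
    then obtain c where c: "\<forall>j k. \<Psi> j $ k = Tf z s (\<lambda>v. c v k) j" by blast
    have "\<Psi> = (\<lambda>j. \<Sum>v\<in>{1..s}. \<Sum>m\<in>UNIV. axis m (c v m * Phi z v j))"
      using c cmp by (auto simp: vec_eq_iff)
    then show "\<Psi> \<in> Tspace z s" unfolding Tspace_def by blast
  qed
qed

lemma Tspace_ker:
  assumes "\<Psi> \<in> Tspace z s" "z \<noteq> 0"
  shows "pop (X z ^ s) (cmp \<Psi> k) j = 0"
proof -
  obtain c where c: "\<forall>j k. \<Psi> j $ k = Tf z s (\<lambda>v. c v k) j" using assms(1) Tspace_iff by blast
  then have "cmp \<Psi> k = Tf z s (\<lambda>v. c v k)" by (auto simp: cmp_def)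
  then show ?thesis using T_ker[OF assms(2)] by simp
qed

lemma iter_PT:
  assumes "f \<in> V1inf"
  shows "((proj 1 \<circ> shiftT) ^^ n) f = (\<lambda>j. if 1 \<le> j then f (j + int n) else 0)"
proof (induction n)
  case 0 then show ?case using assms by (auto simp: V1inf_def)
next
  case (Suc n)
  have "((proj 1 \<circ> shiftT) ^^ Suc n) f = proj 1 (shiftT (((proj 1 \<circ> shiftT) ^^ n) f))" by simp
  then show ?case by (simp only: Suc) (auto simp: proj_def shiftT_def algebra_simps)
qed

lemma proj_zero_iff: "proj L u = (\<lambda>_. 0) \<longleftrightarrow> (\<forall>j\<ge>L. u j = 0)"
  by (auto simp: proj_def fun_eq_iff)

lemma summable_pow_geo:
  fixes x :: real
  shows "\<bar>x\<bar> < 1 \<Longrightarrow> summable (\<lambda>n. real (Suc n) ^ m * x ^ n)"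
proof (induction m arbitrary: x)
  case 0 then show ?case by (simp add: summable_geometric)
next
  case (Suc m)
  have sm: "summable (\<lambda>n. real n ^ m * y ^ n)" if y: "norm y < 1" for y :: real
  proof (rule summable_comparison_test')
    show "summable (\<lambda>n. real (Suc n) ^ m * \<bar>y\<bar> ^ n)" using Suc.IH[of "\<bar>y\<bar>"] y by simp
    show "norm (real n ^ m * y ^ n) \<le> real (Suc n) ^ m * \<bar>y\<bar> ^ n" for n
      by (simp add: abs_mult power_abs power_mono mult_right_mono)
  qed
  have "summable (\<lambda>n. diffs (\<lambda>n. real n ^ m) n * x ^ n)"
    by (rule termdiff_converges[of x 1]) (use Suc.prems sm in auto)
  then show ?case by (simp add: diffs_def)
qed

lemma ffact_bound: "norm (ffact_int j k) \<le> (real_of_int \<bar>j\<bar> + real k) ^ k"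
proof (induction k)
  case 0 then show ?case by simp
next
  case (Suc k)
  have "norm (ffact_int j (Suc k)) = norm (ffact_int j k) * norm (of_int j - of_nat k :: complex)"
    by (simp add: ffact_Suc norm_mult)
  have "norm (of_int j - of_nat k :: complex) \<le> real_of_int \<bar>j\<bar> + real (Suc k)"
  proof -
    have "norm (of_int j - of_nat k :: complex) = \<bar>real_of_int j - real k\<bar>"
      by (metis norm_of_real of_real_diff of_real_of_int_eq of_real_of_nat_eq real_norm_def)
    then show ?thesis by simp
  qed
  have "norm (ffact_int j k) \<le> (real_of_int \<bar>j\<bar> + real (Suc k)) ^ k"
    using Suc.IH by (rule order_trans) (simp add: power_mono)
  then have "norm (ffact_int j k) * norm (of_int j - of_nat k :: complex)
      \<le> (real_of_int \<bar>j\<bar> + real (Suc k)) ^ k * (real_of_int \<bar>j\<bar> + real (Suc k))"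
    using \<open>norm (of_int j - of_nat k :: complex) \<le> _\<close> by (rule mult_mono) auto
  then have "norm (ffact_int j (Suc k)) \<le> (real_of_int \<bar>j\<bar> + real (Suc k)) ^ k * (real_of_int \<bar>j\<bar> + real (Suc k))"
    using \<open>norm (ffact_int j (Suc k)) = _\<close> by (simp only:)
  then show ?case by (simp only: power_Suc2)
qed

definition sqs :: "(int \<Rightarrow> 'a::real_normed_vector) \<Rightarrow> bool" where
  "sqs u \<longleftrightarrow> summable (\<lambda>n::nat. (norm (u (int n + 1)))\<^sup>2)"

lemma Phi_sqs:
  assumes z0: "z \<noteq> 0" and z1: "norm z < 1"
  shows "sqs (Phi z v)"
proof -
  define \<rho> where "\<rho> = norm z"
  define k where "k = v - 1"
  define A where "A = \<rho> powi (2 - int v)"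
  have \<rho>: "\<rho> > 0" "\<rho> < 1" using z0 z1 by (auto simp: \<rho>_def)
  have A: "A \<ge> 0" using \<rho> by (simp add: A_def)
  have b: "(norm (Phi z v (int n + 1)))\<^sup>2 \<le> (A * real (Suc k) ^ k)\<^sup>2 * (real (Suc n) ^ (2*k) * (\<rho>\<^sup>2) ^ n)" for n
  proof -
    have pw: "norm (z powi (int n + 1 - int v + 1)) = \<rho> ^ n * A"
    proof -
      have "norm (z powi (int n + 1 - int v + 1)) = \<rho> powi (int n + (2 - int v))"
        by (simp add: \<rho>_def norm_power_int algebra_simps)
      also have "\<dots> = \<rho> ^ n * A" using \<rho> by (simp add: power_int_add A_def)
      finally show ?thesis .
    qed
    have ff: "norm (ffact_int (int n + 1) k) \<le> real (Suc k) ^ k * real (Suc n) ^ k"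
    proof -
      have "norm (ffact_int (int n + 1) k) \<le> (real_of_int \<bar>int n + 1\<bar> + real k) ^ k" by (rule ffact_bound)
      also have "\<dots> \<le> (real (Suc k) * real (Suc n)) ^ k"
        by (rule power_mono) (auto simp: algebra_simps)
      finally show ?thesis by (simp add: power_mult_distrib)
    qed
    have "norm (Phi z v (int n + 1)) = norm (ffact_int (int n + 1) (v - 1)) * norm (z powi (int n + 1 - int v + 1))"
      by (simp only: Phi_def norm_mult)
    then have "norm (Phi z v (int n + 1)) = norm (ffact_int (int n + 1) k) * (\<rho> ^ n * A)"
      by (simp only: pw k_def)
    also have "\<dots> \<le> (real (Suc k) ^ k * real (Suc n) ^ k) * (\<rho> ^ n * A)"
      using ff A \<rho> by (intro mult_right_mono) auto
    finally have "norm (Phi z v (int n + 1)) \<le> (A * real (Suc k) ^ k) * (real (Suc n) ^ k * \<rho> ^ n)"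
      by (simp add: ac_simps)
    then have "(norm (Phi z v (int n + 1)))\<^sup>2 \<le> ((A * real (Suc k) ^ k) * (real (Suc n) ^ k * \<rho> ^ n))\<^sup>2"
      by (rule power_mono) simp
    then show ?thesis by (simp add: power_mult_distrib power_mult[symmetric] power_even_eq mult.commute[of 2])
  qed
  have "summable (\<lambda>n. (A * real (Suc k) ^ k)\<^sup>2 * (real (Suc n) ^ (2*k) * (\<rho>\<^sup>2) ^ n))"
    by (rule summable_mult, rule summable_pow_geo) (use \<rho> in \<open>simp add: abs_less_iff power_less_one_iff\<close>)
  then show ?thesis unfolding sqs_def
    by (rule summable_comparison_test') (use b in auto)
qed

lemma sqs_add:
  assumes "sqs u" "sqs v"
  shows "sqs (\<lambda>j. u j + v j)"
  unfolding sqs_def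
proof (rule summable_comparison_test')
  show "summable (\<lambda>n. 2 * (norm (u (int n + 1)))\<^sup>2 + 2 * (norm (v (int n + 1)))\<^sup>2)"
    using assms unfolding sqs_def by (intro summable_add summable_mult)
  fix n
  have "(norm (u (int n + 1) + v (int n + 1)))\<^sup>2 \<le> (norm (u (int n + 1)) + norm (v (int n + 1)))\<^sup>2"
    by (rule power_mono[OF norm_triangle_ineq]) simp
  also have "\<dots> \<le> 2 * (norm (u (int n + 1)))\<^sup>2 + 2 * (norm (v (int n + 1)))\<^sup>2"
  proof -
    fix a b :: real
    have "(a+b)^2 \<le> 2*a^2 + 2*b^2" for a b :: real
    proof -
      have "(a+b)^2 = a^2 + 2*a*b + b^2" "(a-b)^2 = a^2 - 2*a*b + b^2"
        by (simp_all add: power2_eq_square algebra_simps)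
      moreover have "0 \<le> (a - b)^2" by simp
      ultimately show ?thesis by linarith
    qed
    then show ?thesis .
  qed
  finally show "norm ((norm (u (int n + 1) + v (int n + 1)))\<^sup>2)
      \<le> 2 * (norm (u (int n + 1)))\<^sup>2 + 2 * (norm (v (int n + 1)))\<^sup>2" by simp
qed

lemma sqs_zero: "sqs (\<lambda>_. 0)"
  by (simp add: sqs_def)

lemma sqs_sum:
  assumes "\<forall>x\<in>S. sqs (f x)"
  shows "sqs (\<lambda>j. \<Sum>x\<in>S. f x j)"
  using assms
proof (induction S rule: infinite_finite_induct)
  case (insert x S) then show ?case by (simp add: sqs_add)
qed (auto simp: sqs_zero)

lemma sqs_scale:
  assumes "sqs u"
  shows "sqs (\<lambda>j. (c::complex) * u j)"
  using summable_mult[OF assms[unfolded sqs_def], of "(norm c)\<^sup>2"]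
  by (simp add: sqs_def norm_mult power_mult_distrib)

lemma sqs_vec:
  fixes u :: "int \<Rightarrow> complex^'d::finite"
  assumes "\<forall>k. sqs (cmp u k)"
  shows "sqs u"
proof -
  have e: "(norm (u j))\<^sup>2 = (\<Sum>k\<in>UNIV. (norm (u j $ k))\<^sup>2)" for j
    by (simp add: norm_vec_def L2_set_def sum_nonneg)
  show ?thesis
    unfolding sqs_def e using assms
    by (intro summable_sum) (simp add: sqs_def cmp_def)
qed

lemma sqs_ev0:
  assumes "\<forall>j\<ge>J. u j = 0"
  shows "sqs u"
  unfolding sqs_def
proof (rule summable_comparison_test')
  show "summable (\<lambda>n::nat. 0::real)" by simp
  show "norm ((norm (u (int n + 1)))\<^sup>2) \<le> 0" if "nat J \<le> n" for n
    using assms that by auto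
qed

lemma Tf_sqs:
  assumes "z \<noteq> 0" "norm z < 1"
  shows "sqs (Tf z s c)"
proof -
  have "sqs (\<lambda>j. \<Sum>v\<in>{1..s}. c v * Phi z v j)"
    by (intro sqs_sum ballI sqs_scale Phi_sqs assms)
  then show ?thesis by (simp add: Tf_def[abs_def])
qed

lemma Tspace_sqs:
  assumes "\<Psi> \<in> Tspace z s" "z \<noteq> 0" "norm z < 1"
  shows "sqs \<Psi>"
proof -
  obtain c where c: "\<forall>j k. \<Psi> j $ k = Tf z s (\<lambda>v. c v k) j" using assms(1) Tspace_iff by blast
  then have "cmp \<Psi> k = Tf z s (\<lambda>v. c v k)" for k by (auto simp: cmp_def)
  then show ?thesis using Tf_sqs[OF assms(2,3)] by (intro sqs_vec) simp
qed

lemma sqs_tz: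
  fixes \<Psi> :: "int \<Rightarrow> complex^'d::finite"
  assumes "sqs \<Psi>"
  shows "(\<lambda>n::nat. cmp \<Psi> k (int n)) \<longlonglongrightarrow> 0"
proof -
  have "(\<lambda>n. (norm (\<Psi> (int n + 1)))\<^sup>2) \<longlonglongrightarrow> 0"
    using assms unfolding sqs_def by (rule summable_LIMSEQ_zero)
  then have "(\<lambda>n. sqrt ((norm (\<Psi> (int n + 1)))\<^sup>2)) \<longlonglongrightarrow> sqrt 0"
    by (rule tendsto_real_sqrt)
  then have t: "(\<lambda>n. norm (\<Psi> (int n + 1))) \<longlonglongrightarrow> 0" by simp
  have b: "\<forall>n. norm (cmp \<Psi> k (int (Suc n))) \<le> norm (\<Psi> (int n + 1))"
  proof
    fix n
    have "int (Suc n) = int n + 1" by simp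
    then show "norm (cmp \<Psi> k (int (Suc n))) \<le> norm (\<Psi> (int n + 1))"
      unfolding cmp_def by (simp only: \<open>int (Suc n) = int n + 1\<close>) (rule Finite_Cartesian_Product.norm_nth_le)
  qed
  have "(\<lambda>n. cmp \<Psi> k (int (Suc n))) \<longlonglongrightarrow> 0"
    by (rule Lim_null_comparison[OF always_eventually[OF b] t])
  then show ?thesis by (rule LIMSEQ_imp_Suc)
qed

theorem mainTheorem18:
  fixes p q :: int and a :: "int \<Rightarrow> complex^'d^'d"
  assumes band: "is_laurent_bandwidth p q a"
    and reg: "regular_bbl p q a"
  defines "Zin \<equiv> {z \<in> nonzero_roots p q a. norm z < 1}"
    and "K \<equiv> \<lambda>z. kerA p q a \<inter> Tspace z (root_mult p q a z)"
  shows "M1inf p q a \<inter> Hsq =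
           {(\<lambda>j. f j + proj 1 (\<lambda>i. \<Sum>z\<in>Zin. g z i) j) | f g.
              f \<in> F1minus p q a \<and> (\<forall>z\<in>Zin. g z \<in> K z)}
         \<and> (\<forall>g. (\<forall>z\<in>Zin. g z \<in> K z) \<and> (\<lambda>i. \<Sum>z\<in>Zin. g z i) = (\<lambda>_. 0)
              \<longrightarrow> (\<forall>z\<in>Zin. g z = (\<lambda>_. 0)))
         \<and> (\<forall>f g. f \<in> F1minus p q a \<and> (\<forall>z\<in>Zin. g z \<in> K z)
              \<and> f = proj 1 (\<lambda>i. \<Sum>z\<in>Zin. g z i) \<longrightarrow> f = (\<lambda>_. 0))"
proof -
  have pq: "p \<le> q" using band by (simp add: is_laurent_bandwidth_def)
  have regD: "symbol_det p q a \<noteq> 0" using reg by (simp add: regular_bbl_def)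
  define NZ where "NZ = nonzero_roots p q a"
  define s where "s = root_mult p q a"
  have finNZ: "finite NZ"
  proof -
    have "NZ \<subseteq> {z. poly (symbol_det p q a) z = 0}" by (auto simp: NZ_def nonzero_roots_def)
    then show ?thesis using poly_roots_finite[OF regD] finite_subset by blast
  qed
  have ZinNZ: "Zin \<subseteq> NZ" by (auto simp: Zin_def NZ_def)
  have finZin: "finite Zin" using ZinNZ finNZ finite_subset by blast
  have NZnz: "z \<in> NZ \<Longrightarrow> z \<noteq> 0" for z by (simp add: NZ_def nonzero_roots_def)
  have Zinnz: "z \<in> Zin \<Longrightarrow> z \<noteq> 0 \<and> norm z < 1" for z using ZinNZ NZnz by (auto simp: Zin_def)
  have Kiff: "g \<in> K z \<longleftrightarrow> bbl p q a g = (\<lambda>_. 0) \<and> g \<in> Tspace z (s z)" for g z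
    by (simp add: K_def kerA_def s_def)
  have Kker: "\<forall>z\<in>Zin. g z \<in> K z \<Longrightarrow> \<forall>z\<in>Zin. \<forall>j. pop (X z ^ s z) (cmp (g z) i) j = 0" for g i
    using Kiff Zinnz Tspace_ker by blast
  define L0 where "L0 = 1 - min p 0"
  have M_iff: "\<Psi> \<in> M1inf p q a \<longleftrightarrow> \<Psi> \<in> V1inf \<and> (\<forall>j\<ge>L0. bbl p q a \<Psi> j = 0)" for \<Psi>
    by (simp add: M1inf_def proj_zero_iff L0_def)
  have Hsq_iff: "\<Psi> \<in> Hsq \<longleftrightarrow> \<Psi> \<in> V1inf \<and> sqs \<Psi>" for \<Psi> :: "'d seq"
    by (simp add: Hsq_def sqs_def)
  have projG: "\<forall>j\<ge>L0. bbl p q a (proj 1 (\<lambda>i. \<Sum>z\<in>Zin. g z i)) j = 0"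
    if g: "\<forall>z\<in>Zin. g z \<in> K z" for g
  proof (intro allI impI)
    fix j assume j: "L0 \<le> j"
    have "bbl p q a (proj 1 (\<lambda>i. \<Sum>z\<in>Zin. g z i)) j = bbl p q a (\<lambda>i. \<Sum>z\<in>Zin. g z i) j"
      by (rule bbl_local) (use j in \<open>auto simp: proj_def L0_def\<close>)
    also have "\<dots> = (\<Sum>z\<in>Zin. bbl p q a (g z) j)" by (rule bbl_sum)
    also have "\<dots> = 0" using g Kiff by simp
    finally show "bbl p q a (proj 1 (\<lambda>i. \<Sum>z\<in>Zin. g z i)) j = 0" .
  qed
  have F_ev: "\<exists>N. \<forall>j\<ge>N. f j = 0" if f: "f \<in> F1minus p q a" for f
  proof -
    from f obtain k where fM: "f \<in> M1inf p q a" and k: "((proj 1 \<circ> shiftT) ^^ k) f = (\<lambda>_. 0)"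
      by (auto simp: F1minus_def)
    have fV: "f \<in> V1inf" using fM M_iff by blast
    have "f t = 0" if "t \<ge> 1 + int k" for t
    proof -
      have "((proj 1 \<circ> shiftT) ^^ k) f (t - int k) = 0" using k by simp
      then show ?thesis using that by (simp add: iter_PT[OF fV])
    qed
    then show ?thesis by blast
  qed
  have indep_ev: "\<forall>z\<in>Zin. g z = (\<lambda>_. 0)"
    if g: "\<forall>z\<in>Zin. g z \<in> K z" and ev: "\<forall>j\<ge>N. (\<Sum>z\<in>Zin. g z j) = 0" for g N
  proof
    fix z0 assume z0: "z0 \<in> Zin"
    have "g z0 j $ i = 0" for j i
    proof -
      obtain R where R: "\<forall>g'. (\<forall>z\<in>Zin. \<forall>j. pop (X z ^ s z) (g' z) j = 0) \<longrightarrow> g' z0 = pop R (\<lambda>j. \<Sum>z\<in>Zin. g' z j)"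
        using iso[OF finZin z0] by blast
      have e: "cmp (g z0) i = pop R (\<lambda>j. \<Sum>z\<in>Zin. cmp (g z) i j)"
        using R[rule_format, of "\<lambda>z. cmp (g z) i"] Kker[OF g, of i] by simp
      have "\<forall>j\<ge>N. (\<Sum>z\<in>Zin. cmp (g z) i j) = 0"
        using ev by (simp add: cmp_def flip: sum_component)
      then have "\<forall>j\<ge>N. cmp (g z0) i j = 0" unfolding e by (rule pop_ez)
      moreover have "\<forall>j. pop (X z0 ^ s z0) (cmp (g z0) i) j = 0" using Kker[OF g, of i] z0 by blast
      ultimately have "cmp (g z0) i j = 0" using Z_lemma Zinnz[OF z0] by blast
      then show ?thesis by (simp add: cmp_def)
    qed
    then show "g z0 = (\<lambda>_. 0)" by (auto simp: vec_eq_iff)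
  qed
  have partB: "\<forall>g. (\<forall>z\<in>Zin. g z \<in> K z) \<and> (\<lambda>i. \<Sum>z\<in>Zin. g z i) = (\<lambda>_. 0)
              \<longrightarrow> (\<forall>z\<in>Zin. g z = (\<lambda>_. 0))"
  proof (intro allI impI)
    fix g assume "(\<forall>z\<in>Zin. g z \<in> K z) \<and> (\<lambda>i. \<Sum>z\<in>Zin. g z i) = (\<lambda>_. 0)"
    then show "\<forall>z\<in>Zin. g z = (\<lambda>_. 0)" using indep_ev[of g 0] by (auto simp: fun_eq_iff)
  qed
  have partC: "\<forall>f g. f \<in> F1minus p q a \<and> (\<forall>z\<in>Zin. g z \<in> K z)
              \<and> f = proj 1 (\<lambda>i. \<Sum>z\<in>Zin. g z i) \<longrightarrow> f = (\<lambda>_. 0)"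
  proof (intro allI impI)
    fix f g assume H: "f \<in> F1minus p q a \<and> (\<forall>z\<in>Zin. g z \<in> K z) \<and> f = proj 1 (\<lambda>i. \<Sum>z\<in>Zin. g z i)"
    obtain N where N: "\<forall>j\<ge>N. f j = 0" using F_ev H by blast
    have "\<forall>j\<ge>max N 1. (\<Sum>z\<in>Zin. g z j) = 0"
    proof (intro allI impI)
      fix j assume "max N 1 \<le> j"
      then have "f j = 0" "f j = (\<Sum>z\<in>Zin. g z j)" using N H by (auto simp: proj_def)
      then show "(\<Sum>z\<in>Zin. g z j) = 0" by simp
    qed
    then have "\<forall>z\<in>Zin. g z = (\<lambda>_. 0)" using indep_ev H by blast
    then show "f = (\<lambda>_. 0)" using H by (simp add: proj_def)
  qed
  have sup: "(\<lambda>j. f j + proj 1 (\<lambda>i. \<Sum>z\<in>Zin. g z i) j) \<in> M1inf p q a \<inter> Hsq"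
    if f: "f \<in> F1minus p q a" and g: "\<forall>z\<in>Zin. g z \<in> K z" for f g
  proof -
    define \<Psi> where "\<Psi> = (\<lambda>j. f j + proj 1 (\<lambda>i. \<Sum>z\<in>Zin. g z i) j)"
    have fM: "f \<in> M1inf p q a" using f by (simp add: F1minus_def)
    have fV: "f \<in> V1inf" and fb: "\<forall>j\<ge>L0. bbl p q a f j = 0" using fM M_iff by auto
    have V: "\<Psi> \<in> V1inf" using fV by (simp add: V1inf_def \<Psi>_def proj_def)
    have B: "\<forall>j\<ge>L0. bbl p q a \<Psi> j = 0"
      using fb projG[OF g] by (simp add: \<Psi>_def bbl_add)
    obtain N where N: "\<forall>j\<ge>N. f j = 0" using F_ev f by blast
    have sf: "sqs f" using sqs_ev0[OF N] .
    have sG: "sqs (\<lambda>i. \<Sum>z\<in>Zin. g z i)"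
      using g Kiff Zinnz Tspace_sqs by (intro sqs_sum) blast
    have sP: "sqs (proj 1 (\<lambda>i. \<Sum>z\<in>Zin. g z i))"
      using sG by (simp add: sqs_def proj_def)
    have "sqs \<Psi>" unfolding \<Psi>_def by (rule sqs_add[OF sf sP])
    then show ?thesis using V B M_iff Hsq_iff by (simp add: \<Psi>_def[symmetric])
  qed
  have sub: "\<exists>f g. \<Psi> = (\<lambda>j. f j + proj 1 (\<lambda>i. \<Sum>z\<in>Zin. g z i) j) \<and> f \<in> F1minus p q a \<and> (\<forall>z\<in>Zin. g z \<in> K z)"
    if \<Psi>: "\<Psi> \<in> M1inf p q a \<inter> Hsq" for \<Psi>
  proof -
    have V: "\<Psi> \<in> V1inf" and B: "\<forall>j\<ge>L0. bbl p q a \<Psi> j = 0" using \<Psi> M_iff by auto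
    have S: "sqs \<Psi>" using \<Psi> Hsq_iff by auto
    obtain J C where JC: "\<forall>k j. j \<ge> J \<longrightarrow> \<Psi> j $ k = (\<Sum>r\<in>NZ. Tf r (s r) (C k r) j)"
      using sol[OF pq regD B] unfolding NZ_def s_def by blast
    define h where "h = (\<lambda>r j. \<chi> k. Tf r (s r) (C k r) j)"
    have hT: "h r \<in> Tspace r (s r)" for r
      unfolding Tspace_iff by (rule exI[of _ "\<lambda>v k. C k r v"]) (simp add: h_def)
    have hk: "\<forall>k j. pop (X r ^ s r) (cmp (h r) k) j = 0" if "r \<in> NZ" for r
      using Tspace_ker[OF hT NZnz[OF that]] by blast
    have hsum: "\<Psi> j = (\<Sum>r\<in>NZ. h r j)" if "j \<ge> J" for j
      using JC that by (simp add: vec_eq_iff h_def)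
    have hA: "bbl p q a (h r0) = (\<lambda>_. 0)" if r0: "r0 \<in> NZ" for r0
    proof -
      have "bbl p q a (h r0) j $ i = 0" for i j
      proof -
        define w where "w = (\<lambda>r. cmp (bbl p q a (h r)) i)"
        have wk: "\<forall>r\<in>NZ. \<forall>j. pop (X r ^ s r) (w r) j = 0"
          unfolding w_def using hk pop_bbl_zero by blast
        obtain R where R: "\<forall>g'. (\<forall>z\<in>NZ. \<forall>j. pop (X z ^ s z) (g' z) j = 0) \<longrightarrow> g' r0 = pop R (\<lambda>j. \<Sum>z\<in>NZ. g' z j)"
          using iso[OF finNZ r0] by blast
        have e: "w r0 = pop R (\<lambda>j. \<Sum>z\<in>NZ. w z j)" using R wk by blast
        have "\<forall>j\<ge>max (J - p) L0. (\<Sum>z\<in>NZ. w z j) = 0"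
        proof (intro allI impI)
          fix j assume j: "max (J - p) L0 \<le> j"
          have "(\<Sum>z\<in>NZ. w z j) = bbl p q a (\<lambda>t. \<Sum>r\<in>NZ. h r t) j $ i"
            by (simp add: w_def cmp_def bbl_sum)
          also have "bbl p q a (\<lambda>t. \<Sum>r\<in>NZ. h r t) j = bbl p q a \<Psi> j"
            by (rule bbl_local) (use j hsum in auto)
          also have "\<dots> = 0" using B j by simp
          finally show "(\<Sum>z\<in>NZ. w z j) = 0" by simp
        qed
        then have "\<forall>j\<ge>max (J - p) L0. w r0 j = 0" unfolding e by (rule pop_ez)
        then have "w r0 j = 0" using Z_lemma[of r0 "s r0" "w r0"] wk r0 NZnz[OF r0] by blast
        then show ?thesis by (simp add: w_def cmp_def)
      qed
      then show ?thesis by (auto simp: vec_eq_iff)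
    qed
    have hU: "h r0 = (\<lambda>_. 0)" if r0: "r0 \<in> NZ" and n1: "norm r0 \<ge> 1" for r0
    proof -
      have "h r0 j $ k = 0" for k j
      proof -
        define v where "v = (\<lambda>r. cmp (h r) k)"
        have vk: "\<forall>r\<in>NZ. \<forall>j. pop (X r ^ s r) (v r) j = 0" unfolding v_def using hk by blast
        obtain R where R: "\<forall>g'. (\<forall>z\<in>NZ. \<forall>j. pop (X z ^ s z) (g' z) j = 0) \<longrightarrow> g' r0 = pop R (\<lambda>j. \<Sum>z\<in>NZ. g' z j)"
          using iso[OF finNZ r0] by blast
        have e: "v r0 = pop R (\<lambda>j. \<Sum>z\<in>NZ. v z j)" using R vk by blast
        have t0: "(\<lambda>n::nat. cmp \<Psi> k (int n)) \<longlonglongrightarrow> 0" by (rule sqs_tz[OF S])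
        have "\<forall>\<^sub>F n in sequentially. cmp \<Psi> k (int n) = (\<Sum>z\<in>NZ. v z (int n))"
          unfolding eventually_sequentially
          by (rule exI[of _ "nat J"]) (auto simp: v_def cmp_def hsum)
        then have "(\<lambda>n::nat. (\<Sum>z\<in>NZ. v z (int n))) \<longlonglongrightarrow> 0"
          by (rule Lim_transform_eventually[OF t0])
        then have "(\<lambda>n::nat. v r0 (int n)) \<longlonglongrightarrow> 0"
          unfolding e by (rule pop_tz)
        then have "v r0 j = 0" using U_lemma[of r0 "s r0" "v r0"] vk r0 n1 by blast
        then show ?thesis by (simp add: v_def cmp_def)
      qed
      then show ?thesis by (auto simp: vec_eq_iff)
    qed
    define G where "G = (\<lambda>i. \<Sum>z\<in>Zin. h z i)"
    define f where "f = (\<lambda>j. \<Psi> j - proj 1 G j)"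
    have eq: "\<Psi> = (\<lambda>j. f j + proj 1 (\<lambda>i. \<Sum>z\<in>Zin. h z i) j)"
      by (simp add: f_def G_def)
    have gK: "\<forall>z\<in>Zin. h z \<in> K z" using hA hT Kiff ZinNZ by blast
    have fV: "f \<in> V1inf" using V by (simp add: V1inf_def f_def proj_def)
    have fB: "\<forall>j\<ge>L0. bbl p q a f j = 0"
      using B projG[OF gK] by (simp add: f_def bbl_diff G_def)
    have fE: "f j = 0" if j: "j \<ge> max J 1" for j
    proof -
      have "\<Psi> j = (\<Sum>r\<in>NZ. h r j)" using hsum j by simp
      also have "\<dots> = (\<Sum>r\<in>NZ - Zin. h r j) + (\<Sum>r\<in>Zin. h r j)"
        by (rule sum.subset_diff[OF ZinNZ finNZ])
      also have "(\<Sum>r\<in>NZ - Zin. h r j) = 0"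
      proof (rule sum.neutral, intro ballI)
        fix r assume "r \<in> NZ - Zin"
        then have "r \<in> NZ" "norm r \<ge> 1" by (auto simp: Zin_def NZ_def)
        then show "h r j = 0" using hU by simp
      qed
      finally show ?thesis using j by (simp add: f_def proj_def G_def)
    qed
    have fF: "f \<in> F1minus p q a"
    proof -
      define k where "k = Suc (nat (max J 1))"
      have "((proj 1 \<circ> shiftT) ^^ k) f = (\<lambda>_. 0)"
      proof
        fix j
        have it: "((proj 1 \<circ> shiftT) ^^ k) f j = (if 1 \<le> j then f (j + int k) else 0)"
          by (simp only: iter_PT[OF fV])
        have "int k = max J 1 + 1" by (simp add: k_def)
        then have "1 \<le> j \<Longrightarrow> f (j + int k) = 0" using fE[of "j + int k"] by simp
        then show "((proj 1 \<circ> shiftT) ^^ k) f j = 0" using it by simp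
      qed
      moreover have "k \<ge> 1" by (simp add: k_def)
      moreover have "f \<in> M1inf p q a" using fV fB M_iff by blast
      ultimately show ?thesis unfolding F1minus_def by blast
    qed
    show ?thesis using eq fF gK by blast
  qed
  have partA: "M1inf p q a \<inter> Hsq =
           {(\<lambda>j. f j + proj 1 (\<lambda>i. \<Sum>z\<in>Zin. g z i) j) | f g.
              f \<in> F1minus p q a \<and> (\<forall>z\<in>Zin. g z \<in> K z)}"
    using sup sub by blast
  show ?thesis using partA partB partC by blast
qed

end
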